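(* Consider the two-state hidden Markov model in which $X_i=\mu_i+\epsilon_i$, $i=1,\dots,n$, with $\epsilon_i\stackrel{iid}{\sim}N(0,\sigma^2)$ ($\sigma^2$ known) independent of everything else; the hidden states $\theta_1,\dots,\theta_n\in\{0,1\}$ form a homogeneous Markov chain with initial distribution $(\psi_0,\psi_1)$ and transition matrix $\mathcal{A}=(a_{jk})$, $a_{jk}=P(\theta_i=k\mid\theta_{i-1}=j)$, $0<a_{jk}<1$; and, given $\pmb\theta$, the $\mu_i$ are conditionally independent with $\mu_i\mid\theta_i=k\sim g_k$, $k=0,1$. Let $f_k(x)=\int\phi_\sigma(x-\mu)g_k(\mu)\,d\mu$, where $\phi_\sigma$ is the $N(0,\sigma^2)$ density, and suppose the HMM parameters $\Lambda=(\mathcal{A},(\psi_0,\psi_1),f_0,f_1)$ are known. Then the estimator of $\pmb\mu=(\mu_1,\dots,\mu_n)$ based on $\pmb X=\pmb x$ that minimizes the mean squared error $n^{-1}\sum_{i=1}^n\mathbb{E}(\mu_i-\hat\mu_i)^2$ is $$\hat\mu_i^{\sf Bayes}(\pmb x;\Lambda)=\sum_{k=0}^1\mathbb{E}(\mu_i\mid\theta_i=k,x_i)\,\mathbb{P}(\theta_i=k\mid\pmb x)=\sum_{k=0}^1\Big\{x_i+\sigma^2\frac{f_k'(x_i)}{f_k(x_i)}\Big\}\mathbb{P}(\theta_i=k\mid\pmb x),\quad i=1,\dots,n.$$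
   Context: $f_k'$ denotes the derivative of $f_k$. Expectations are over the joint distribution of $(\pmb\theta,\pmb\mu,\pmb X)$ under the model. *)

theory Defs
  imports "HOL-Probability.Probability"
begin

(* Indices are 0-based: i ranges over {..<n}; states are 0 and 1. *)

definition phi :: "real \<Rightarrow> real \<Rightarrow> real" where
  "phi \<sigma> t = normal_density 0 \<sigma> t"

definition mixf :: "(nat \<Rightarrow> real \<Rightarrow> real) \<Rightarrow> real \<Rightarrow> nat \<Rightarrow> real \<Rightarrow> real" where
  "mixf g \<sigma> k x = (LINT m|lborel. phi \<sigma> (x - m) * g k m)"

definition states :: "nat \<Rightarrow> (nat \<Rightarrow> nat) set" where
  "states n = PiE {..<n} (\<lambda>_. {0, 1})"

definition chain_prob :: "(nat \<Rightarrow> real) \<Rightarrow> (nat \<Rightarrow> nat \<Rightarrow> real) \<Rightarrow> nat \<Rightarrow> (nat \<Rightarrow> nat) \<Rightarrow> real" where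
  "chain_prob \<psi> a n \<theta> = \<psi> (\<theta> 0) * (\<Prod>i\<in>{1..<n}. a (\<theta> (i - 1)) (\<theta> i))"

definition post :: "(nat \<Rightarrow> real) \<Rightarrow> (nat \<Rightarrow> nat \<Rightarrow> real) \<Rightarrow> (nat \<Rightarrow> real \<Rightarrow> real) \<Rightarrow> real
    \<Rightarrow> nat \<Rightarrow> nat \<Rightarrow> nat \<Rightarrow> (nat \<Rightarrow> real) \<Rightarrow> real" where
  "post \<psi> a g \<sigma> n i k x =
     (\<Sum>\<theta>\<in>{\<theta>\<in>states n. \<theta> i = k}. chain_prob \<psi> a n \<theta> * (\<Prod>j<n. mixf g \<sigma> (\<theta> j) (x j)))
     / (\<Sum>\<theta>\<in>states n. chain_prob \<psi> a n \<theta> * (\<Prod>j<n. mixf g \<sigma> (\<theta> j) (x j)))"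

definition cond_mean :: "(nat \<Rightarrow> real \<Rightarrow> real) \<Rightarrow> real \<Rightarrow> nat \<Rightarrow> real \<Rightarrow> real" where
  "cond_mean g \<sigma> k y = (LINT m|lborel. m * phi \<sigma> (y - m) * g k m) / mixf g \<sigma> k y"

definition bayes_est :: "(nat \<Rightarrow> real) \<Rightarrow> (nat \<Rightarrow> nat \<Rightarrow> real) \<Rightarrow> (nat \<Rightarrow> real \<Rightarrow> real) \<Rightarrow> real
    \<Rightarrow> nat \<Rightarrow> (nat \<Rightarrow> real) \<Rightarrow> nat \<Rightarrow> real" where
  "bayes_est \<psi> a g \<sigma> n x i =
     (\<Sum>k\<in>{0,1}. (x i + \<sigma>\<^sup>2 * deriv (mixf g \<sigma> k) (x i) / mixf g \<sigma> k (x i)) * post \<psi> a g \<sigma> n i k x)"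

(* n^{-1} sum_i E (mu_i - delta_i(X))^2 under the joint law of (theta, mu, X):
   density P(theta) * prod_j g_{theta_j}(mu_j) phi_sigma(x_j - mu_j) *)
definition mse :: "(nat \<Rightarrow> real) \<Rightarrow> (nat \<Rightarrow> nat \<Rightarrow> real) \<Rightarrow> (nat \<Rightarrow> real \<Rightarrow> real) \<Rightarrow> real
    \<Rightarrow> nat \<Rightarrow> ((nat \<Rightarrow> real) \<Rightarrow> nat \<Rightarrow> real) \<Rightarrow> ennreal" where
  "mse \<psi> a g \<sigma> n \<delta> = ennreal (1 / real n) *
     (\<Sum>i<n. \<Sum>\<theta>\<in>states n.
        \<integral>\<^sup>+ x. \<integral>\<^sup>+ m.
          ennreal (chain_prob \<psi> a n \<theta> * (\<Prod>j<n. g (\<theta> j) (m j) * phi \<sigma> (x j - m j)))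
          * ennreal ((m i - \<delta> x i)\<^sup>2)
        \<partial>(PiM {..<n} (\<lambda>_. lborel)) \<partial>(PiM {..<n} (\<lambda>_. lborel)))"

end

theory Submission
  imports Defs
begin

definition c0 :: "real \<Rightarrow> real" where "c0 \<sigma> = 1 / sqrt (2 * pi * \<sigma>\<^sup>2)"

lemma phi_eq: "phi \<sigma> t = c0 \<sigma> * exp (- t\<^sup>2 / (2 * \<sigma>\<^sup>2))"
  by (simp add: phi_def normal_density_def c0_def)

lemma c0_pos: "\<sigma> > 0 \<Longrightarrow> c0 \<sigma> > 0"
  by (simp add: c0_def)

lemma phi_nonneg: "phi \<sigma> t \<ge> 0"
  by (simp add: phi_def)

lemma phi_pos: "\<sigma> > 0 \<Longrightarrow> phi \<sigma> t > 0"
  by (simp add: phi_def normal_density_pos)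

lemma phi_le: "\<sigma> > 0 \<Longrightarrow> phi \<sigma> t \<le> c0 \<sigma>"
proof -
  assume s: "\<sigma> > 0"
  have "exp (- t\<^sup>2 / (2 * \<sigma>\<^sup>2)) \<le> 1" using s by simp
  then show ?thesis unfolding phi_eq using c0_pos[OF s]
    by (simp add: mult_left_le)
qed

lemma ue_le: "(u::real) \<ge> 0 \<Longrightarrow> u * exp (- u) \<le> 1"
proof -
  assume "u \<ge> 0"
  have "u \<le> exp u" using exp_ge_add_one_self[of u] by linarith
  then have "u * exp (-u) \<le> exp u * exp (-u)" by (simp add: mult_right_mono)
  also have "\<dots> = 1" by (simp add: exp_minus)
  finally show ?thesis .
qed

lemma phi_sq_le: "\<sigma> > 0 \<Longrightarrow> t\<^sup>2 * phi \<sigma> t \<le> 2 * \<sigma>\<^sup>2 * c0 \<sigma>"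
proof -
  assume s: "\<sigma> > 0"
  define u where "u = t\<^sup>2 / (2 * \<sigma>\<^sup>2)"
  have u0: "u \<ge> 0" unfolding u_def by simp
  have t2: "t\<^sup>2 = 2 * \<sigma>\<^sup>2 * u" unfolding u_def using s by simp
  have "t\<^sup>2 * phi \<sigma> t = 2 * \<sigma>\<^sup>2 * c0 \<sigma> * (u * exp (-u))"
    unfolding phi_eq t2 using s by (simp add: u_def)
  also have "\<dots> \<le> 2 * \<sigma>\<^sup>2 * c0 \<sigma> * 1"
    using ue_le[OF u0] c0_pos[OF s] s by (intro mult_left_mono) auto
  finally show ?thesis by simp
qed

definition Cb :: "real \<Rightarrow> real \<Rightarrow> real" where
  "Cb \<sigma> y = (1 + 2 * y\<^sup>2) * c0 \<sigma> + 4 * \<sigma>\<^sup>2 * c0 \<sigma>"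

lemma weight_le: "\<sigma> > 0 \<Longrightarrow> (1 + m\<^sup>2) * phi \<sigma> (y - m) \<le> Cb \<sigma> y"
proof -
  assume s: "\<sigma> > 0"
  have "0 \<le> (m - 2 * y)\<^sup>2" by simp
  then have m2: "m\<^sup>2 \<le> 2 * (y - m)\<^sup>2 + 2 * y\<^sup>2"
    unfolding power2_eq_square by (simp add: algebra_simps)
  have p0: "phi \<sigma> (y - m) \<ge> 0" by (rule phi_nonneg)
  have "(1 + m\<^sup>2) * phi \<sigma> (y - m) \<le> ((1 + 2 * y\<^sup>2) + 2 * (y - m)\<^sup>2) * phi \<sigma> (y - m)"
    using m2 p0 by (intro mult_right_mono) auto
  also have "\<dots> = (1 + 2 * y\<^sup>2) * phi \<sigma> (y - m) + 2 * ((y - m)\<^sup>2 * phi \<sigma> (y - m))"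
    by (simp add: algebra_simps)
  also have "\<dots> \<le> (1 + 2 * y\<^sup>2) * c0 \<sigma> + 2 * (2 * \<sigma>\<^sup>2 * c0 \<sigma>)"
    using phi_le[OF s] phi_sq_le[OF s] by (intro add_mono mult_left_mono) auto
  finally show ?thesis by (simp add: Cb_def)
qed

definition dphi :: "real \<Rightarrow> real \<Rightarrow> real" where
  "dphi \<sigma> t = - (t / \<sigma>\<^sup>2) * phi \<sigma> t"
definition ddphi :: "real \<Rightarrow> real \<Rightarrow> real" where
  "ddphi \<sigma> t = (t\<^sup>2 / \<sigma>\<^sup>2 ^ 2 - 1 / \<sigma>\<^sup>2) * phi \<sigma> t"

lemma phi_deriv: "\<sigma> > 0 \<Longrightarrow> (phi \<sigma> has_real_derivative dphi \<sigma> t) (at t)"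
  unfolding phi_eq[abs_def] dphi_def phi_eq
  by (auto intro!: derivative_eq_intros simp: field_simps power2_eq_square)

lemma dphi_deriv: "\<sigma> > 0 \<Longrightarrow> (dphi \<sigma> has_real_derivative ddphi \<sigma> t) (at t)"
  unfolding dphi_def[abs_def] ddphi_def phi_eq
  by (auto intro!: derivative_eq_intros simp: field_simps power2_eq_square)

lemma ddphi_le: "\<sigma> > 0 \<Longrightarrow> \<bar>ddphi \<sigma> t\<bar> \<le> 3 * c0 \<sigma> / \<sigma>\<^sup>2"
proof -
  assume s: "\<sigma> > 0"
  have "\<bar>ddphi \<sigma> t\<bar> \<le> (t\<^sup>2 / \<sigma>\<^sup>2 ^ 2 + 1 / \<sigma>\<^sup>2) * phi \<sigma> t"
  proof -
    have "\<bar>t\<^sup>2 / \<sigma>\<^sup>2 ^ 2 - 1 / \<sigma>\<^sup>2\<bar> \<le> t\<^sup>2 / \<sigma>\<^sup>2 ^ 2 + 1 / \<sigma>\<^sup>2"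
      by (simp add: abs_le_iff)
    then show ?thesis unfolding ddphi_def using phi_nonneg[of \<sigma> t]
      by (simp add: abs_mult mult_right_mono del: power_abs)
  qed
  also have "\<dots> = (t\<^sup>2 * phi \<sigma> t) / \<sigma>\<^sup>2 ^ 2 + phi \<sigma> t / \<sigma>\<^sup>2"
    by (simp add: algebra_simps)
  also have "\<dots> \<le> (2 * \<sigma>\<^sup>2 * c0 \<sigma>) / \<sigma>\<^sup>2 ^ 2 + c0 \<sigma> / \<sigma>\<^sup>2"
    using phi_sq_le[OF s, of t] phi_le[OF s, of t] s
    by (intro add_mono divide_right_mono) auto
  also have "\<dots> = 3 * c0 \<sigma> / \<sigma>\<^sup>2" using s by (simp add: field_simps power2_eq_square)
  finally show ?thesis .
qed

lemma taylor_phi: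
  assumes s: "\<sigma> > 0"
  shows "\<bar>phi \<sigma> (t + h) - phi \<sigma> t - h * dphi \<sigma> t\<bar> \<le> 3 * c0 \<sigma> / \<sigma>\<^sup>2 * h\<^sup>2"
proof -
  define diff where "diff = (\<lambda>m::nat. if m = 0 then (\<lambda>u. phi \<sigma> (t + u))
     else if m = 1 then (\<lambda>u. dphi \<sigma> (t + u)) else (\<lambda>u. ddphi \<sigma> (t + u)))"
  have D: "\<forall>m x. m < 2 \<longrightarrow> DERIV (diff m) x :> diff (Suc m) x"
  proof (intro allI impI)
    fix m :: nat and x :: real assume "m < 2"
    then consider "m = 0" | "m = 1" by linarith
    then show "DERIV (diff m) x :> diff (Suc m) x"
    proof cases
      case 1
      have "((\<lambda>u. phi \<sigma> (t + u)) has_real_derivative dphi \<sigma> (t + x) * 1) (at x)"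
        by (rule DERIV_chain2[where f="phi \<sigma>"]) (auto intro!: derivative_eq_intros phi_deriv s)
      then show ?thesis using 1 by (simp add: diff_def)
    next
      case 2
      have "((\<lambda>u. dphi \<sigma> (t + u)) has_real_derivative ddphi \<sigma> (t + x) * 1) (at x)"
        by (rule DERIV_chain2[where f="dphi \<sigma>"]) (auto intro!: derivative_eq_intros dphi_deriv s)
      then show ?thesis using 2 by (simp add: diff_def)
    qed
  qed
  obtain u where u: "\<bar>u\<bar> \<le> \<bar>h\<bar>" and eq: "diff 0 h = (\<Sum>m<2. diff m 0 / fact m * h ^ m) + diff 2 u / fact 2 * h ^ 2"
    using Maclaurin_bi_le[of diff "diff 0" 2 h] D by blast
  have s2: "(\<Sum>m<2. diff m 0 / fact m * h ^ m) = phi \<sigma> t + dphi \<sigma> t * h"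
    by (simp add: diff_def numeral_2_eq_2)
  have E: "phi \<sigma> (t + h) - phi \<sigma> t - h * dphi \<sigma> t = ddphi \<sigma> (t + u) / 2 * h\<^sup>2"
    using eq unfolding s2 by (simp add: diff_def)
  have "\<bar>phi \<sigma> (t + h) - phi \<sigma> t - h * dphi \<sigma> t\<bar> = \<bar>ddphi \<sigma> (t + u) / 2 * h\<^sup>2\<bar>"
    by (simp only: E)
  also have "\<dots> = \<bar>ddphi \<sigma> (t + u)\<bar> / 2 * h\<^sup>2"
    by (simp add: abs_mult)
  also have "\<dots> \<le> \<bar>ddphi \<sigma> (t + u)\<bar> * h\<^sup>2"
    by (intro mult_right_mono) auto
  also have "\<dots> \<le> 3 * c0 \<sigma> / \<sigma>\<^sup>2 * h\<^sup>2"
    using ddphi_le[OF s, of "t + u"] by (intro mult_right_mono) auto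
  finally show ?thesis .
qed

lemma abs_le_sq: "\<bar>m::real\<bar> \<le> 1 + m\<^sup>2"
proof (cases "\<bar>m\<bar> \<le> 1")
  case True
  have "0 \<le> m\<^sup>2" by simp
  then show ?thesis using True by linarith
next
  case False
  have "\<bar>m\<bar> * 1 \<le> \<bar>m\<bar> * \<bar>m\<bar>" using False by (intro mult_left_mono) auto
  then have "\<bar>m\<bar> \<le> m\<^sup>2" by (simp add: power2_eq_square)
  then show ?thesis by linarith
qed

definition FFg :: "(real \<Rightarrow> real) \<Rightarrow> real \<Rightarrow> real \<Rightarrow> real" where
  "FFg G s z = (\<integral>m. phi s (z - m) * G m \<partial>lborel)"

definition DDg :: "(real \<Rightarrow> real) \<Rightarrow> real \<Rightarrow> real \<Rightarrow> real" where
  "DDg G s z = (\<integral>m. dphi s (z - m) * G m \<partial>lborel)"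

definition SSg :: "(real \<Rightarrow> real) \<Rightarrow> real \<Rightarrow> real \<Rightarrow> real" where
  "SSg G s z = (\<integral>m. m * phi s (z - m) * G m \<partial>lborel)"

locale dens =
  fixes G :: "real \<Rightarrow> real" and \<sigma> :: real
  assumes Gm[measurable]: "G \<in> borel_measurable borel"
    and Gnn: "\<And>m. G m \<ge> 0"
    and G1: "(\<integral>\<^sup>+ m. ennreal (G m) \<partial>lborel) = 1"
    and spos: "\<sigma> > 0"
begin

lemma G_int: "integrable lborel G"
  by (rule integrableI_nn_integral_finite[where x=1]) (auto simp: Gnn G1)

lemma G_integral: "(\<integral>m. G m \<partial>lborel) = 1"
  by (subst integral_eq_nn_integral) (auto simp: Gnn G1)

lemma int_weight:
  assumes hm[measurable]: "h \<in> borel_measurable borel" and hb: "\<And>m. \<bar>h m\<bar> \<le> K * (1 + m\<^sup>2)"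
  shows "integrable lborel (\<lambda>m. h m * phi \<sigma> (y - m) * G m)"
proof -
  have i1: "integrable lborel (\<lambda>m. K * Cb \<sigma> y * G m)" using G_int by simp
  have i2: "(\<lambda>m. h m * phi \<sigma> (y - m) * G m) \<in> borel_measurable lborel"
    unfolding phi_def by measurable
  have "\<bar>h 0\<bar> \<le> K" using hb[of 0] by simp
  then have K0: "K \<ge> 0" by (meson abs_ge_zero order_trans)
  have "AE m in lborel. norm (h m * phi \<sigma> (y - m) * G m) \<le> norm (K * Cb \<sigma> y * G m)"
  proof (intro AE_I2)
    fix m
    have "norm (h m * phi \<sigma> (y - m) * G m) = \<bar>h m\<bar> * phi \<sigma> (y - m) * G m"
      using phi_nonneg[of \<sigma>] Gnn by (simp add: abs_mult)
    also have "\<dots> \<le> K * (1 + m\<^sup>2) * phi \<sigma> (y - m) * G m"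
      using hb[of m] phi_nonneg[of \<sigma>] Gnn[of m] by (intro mult_right_mono) auto
    also have "\<dots> = K * ((1 + m\<^sup>2) * phi \<sigma> (y - m)) * G m" by simp
    also have "\<dots> \<le> K * Cb \<sigma> y * G m"
      using weight_le[OF spos, of m y] K0 Gnn[of m] by (intro mult_right_mono mult_left_mono) auto
    also have "\<dots> \<le> norm (K * Cb \<sigma> y * G m)" by simp
    finally show "norm (h m * phi \<sigma> (y - m) * G m) \<le> norm (K * Cb \<sigma> y * G m)" .
  qed
  from Bochner_Integration.integrable_bound[OF i1 i2 this] show ?thesis .
qed

lemma int0: "integrable lborel (\<lambda>m. phi \<sigma> (y - m) * G m)"
  using int_weight[of "\<lambda>_. 1" 1 y] by simp

lemma int1: "integrable lborel (\<lambda>m. m * phi \<sigma> (y - m) * G m)"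
  using int_weight[of "\<lambda>m. m" 1 y] abs_le_sq by simp

lemma int2: "integrable lborel (\<lambda>m. m\<^sup>2 * phi \<sigma> (y - m) * G m)"
  using int_weight[of "\<lambda>m. m\<^sup>2" 1 y] by simp

lemma intd: "integrable lborel (\<lambda>m. dphi \<sigma> (y - m) * G m)"
proof -
  have b: "\<bar>- ((y - m) / \<sigma>\<^sup>2)\<bar> \<le> ((\<bar>y\<bar> + 1) / \<sigma>\<^sup>2) * (1 + m\<^sup>2)" for m
  proof -
    have "\<bar>y - m\<bar> \<le> \<bar>y\<bar> + \<bar>m\<bar>" by simp
    also have "\<dots> \<le> \<bar>y\<bar> * (1 + m\<^sup>2) + (1 + m\<^sup>2)"
    proof -
      have "\<bar>y\<bar> * 1 \<le> \<bar>y\<bar> * (1 + m\<^sup>2)" by (intro mult_left_mono) auto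
      then show ?thesis using abs_le_sq[of m] by linarith
    qed
    finally have "\<bar>y - m\<bar> \<le> (\<bar>y\<bar> + 1) * (1 + m\<^sup>2)" by (simp add: algebra_simps)
    then show ?thesis using spos by (simp add: abs_divide divide_right_mono)
  qed
  show ?thesis using int_weight[of "\<lambda>m. - ((y - m) / \<sigma>\<^sup>2)", OF _ b]
    by (simp add: dphi_def mult.assoc)
qed

lemma mixf_pos: "(\<integral>m. phi \<sigma> (y - m) * G m \<partial>lborel) > 0"
proof -
  have nn: "(\<integral>m. phi \<sigma> (y - m) * G m \<partial>lborel) \<ge> 0"
    by (intro integral_nonneg_AE AE_I2) (simp add: phi_nonneg Gnn)
  have "(\<integral>m. phi \<sigma> (y - m) * G m \<partial>lborel) \<noteq> 0"
  proof
    assume "(\<integral>m. phi \<sigma> (y - m) * G m \<partial>lborel) = 0"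
    then have "AE m in lborel. phi \<sigma> (y - m) * G m = 0"
      using integral_nonneg_eq_0_iff_AE[OF int0] phi_nonneg Gnn by auto
    then have "AE m in lborel. G m = 0"
      by eventually_elim (metis phi_pos[OF spos] mult_eq_0_iff less_irrefl)
    then have "AE m in lborel. ennreal (G m) = 0" by eventually_elim simp
    then have "(\<integral>\<^sup>+ m. ennreal (G m) \<partial>lborel) = 0"
      by (subst nn_integral_0_iff_AE) auto
    then show False using G1 by simp
  qed
  then show ?thesis using nn by simp
qed

abbreviation "FF \<equiv> FFg G \<sigma>"
abbreviation "DD \<equiv> DDg G \<sigma>"
abbreviation "SS \<equiv> SSg G \<sigma>"

lemma FF_taylor: "\<bar>FF z - FF y - (z - y) * DD y\<bar> \<le> 3 * c0 \<sigma> / \<sigma>\<^sup>2 * (z - y)\<^sup>2"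
proof -
  let ?K = "3 * c0 \<sigma> / \<sigma>\<^sup>2"
  let ?r = "\<lambda>m. (phi \<sigma> (z - m) - phi \<sigma> (y - m) - (z - y) * dphi \<sigma> (y - m)) * G m"
  have eqf: "?r = (\<lambda>m. (phi \<sigma> (z - m) * G m - phi \<sigma> (y - m) * G m) - (z - y) * (dphi \<sigma> (y - m) * G m))"
    by (rule ext) (simp add: algebra_simps)
  have i1: "integrable lborel (\<lambda>m. phi \<sigma> (z - m) * G m - phi \<sigma> (y - m) * G m)"
    using int0[of z] int0[of y] by (rule Bochner_Integration.integrable_diff)
  have i2: "integrable lborel (\<lambda>m. (z - y) * (dphi \<sigma> (y - m) * G m))"
    using intd[of y] by (rule integrable_mult_right)
  have ir: "integrable lborel ?r"
    unfolding eqf using i1 i2 by (rule Bochner_Integration.integrable_diff)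
  have "integral\<^sup>L lborel ?r = FF z - FF y - (z - y) * DD y"
    unfolding eqf FFg_def DDg_def
    using Bochner_Integration.integral_diff[OF i1 i2] Bochner_Integration.integral_diff[OF int0[of z] int0[of y]]
      integral_mult_right_zero[where c="z - y" and M=lborel and f="\<lambda>m. dphi \<sigma> (y - m) * G m"]
    by simp
  then have "\<bar>FF z - FF y - (z - y) * DD y\<bar> = \<bar>integral\<^sup>L lborel ?r\<bar>" by simp
  also have "\<dots> \<le> (\<integral>m. ?K * (z - y)\<^sup>2 * G m \<partial>lborel)"
  proof (rule integral_abs_bound_integral)
    show "integrable lborel ?r" by (rule ir)
    show "integrable lborel (\<lambda>m. ?K * (z - y)\<^sup>2 * G m)" using G_int by (rule integrable_mult_right)
    fix m
    have "\<bar>?r m\<bar> = \<bar>phi \<sigma> ((y - m) + (z - y)) - phi \<sigma> (y - m) - (z - y) * dphi \<sigma> (y - m)\<bar> * G m"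
      using Gnn[of m] by (simp add: abs_mult)
    also have "\<dots> \<le> ?K * (z - y)\<^sup>2 * G m"
      using taylor_phi[OF spos, of "y - m" "z - y"] Gnn[of m] by (intro mult_right_mono) auto
    finally show "\<bar>?r m\<bar> \<le> ?K * (z - y)\<^sup>2 * G m" .
  qed
  also have "\<dots> = ?K * (z - y)\<^sup>2" using G_integral by simp
  finally show ?thesis .
qed

lemma FF_deriv: "(FF has_real_derivative DD y) (at y)"
proof -
  let ?K = "3 * c0 \<sigma> / \<sigma>\<^sup>2"
  have ev: "eventually (\<lambda>z. norm ((FF z - FF y) / (z - y) - DD y) \<le> ?K * \<bar>z - y\<bar>) (at y)"
  proof (rule eventually_mono[OF eventually_neq_at_within[of y y UNIV]])
    fix z assume "z \<noteq> y"
    then have nz: "z - y \<noteq> 0" by simp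
    have "(FF z - FF y) / (z - y) - DD y = (FF z - FF y - (z - y) * DD y) / (z - y)"
      using nz by (simp add: field_simps)
    then have "norm ((FF z - FF y) / (z - y) - DD y) = \<bar>FF z - FF y - (z - y) * DD y\<bar> / \<bar>z - y\<bar>"
      by (simp add: abs_divide)
    also have "\<dots> \<le> ?K * (z - y)\<^sup>2 / \<bar>z - y\<bar>"
      using FF_taylor[of z y] by (intro divide_right_mono) auto
    also have "\<dots> = ?K * \<bar>z - y\<bar>"
    proof -
      have e: "(z - y)\<^sup>2 = \<bar>z - y\<bar> * \<bar>z - y\<bar>" by (simp add: power2_eq_square)
      have "\<bar>z - y\<bar> * \<bar>z - y\<bar> / \<bar>z - y\<bar> = \<bar>z - y\<bar>"
        using nz by (simp del: abs_mult_self_eq)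
      then show ?thesis unfolding e by (metis times_divide_eq_right)
    qed
    finally show "norm ((FF z - FF y) / (z - y) - DD y) \<le> ?K * \<bar>z - y\<bar>" .
  qed
  have lim: "((\<lambda>z. ?K * \<bar>z - y\<bar>) \<longlongrightarrow> 0) (at y)"
  proof -
    have "((\<lambda>z. ?K * \<bar>z - y\<bar>) \<longlongrightarrow> ?K * \<bar>y - y\<bar>) (at y)"
      by (intro tendsto_mult_left tendsto_rabs tendsto_diff tendsto_ident_at tendsto_const)
    then show ?thesis by simp
  qed
  have "((\<lambda>z. (FF z - FF y) / (z - y) - DD y) \<longlongrightarrow> 0) (at y)"
    by (rule Lim_null_comparison[OF ev lim])
  then have "((\<lambda>z. (FF z - FF y) / (z - y)) \<longlongrightarrow> DD y) (at y)"
    by (rule LIM_zero_cancel)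
  then show ?thesis by (subst has_field_derivative_iff)
qed

lemma tweedie: "y + \<sigma>\<^sup>2 * deriv FF y / FF y = SS y / FF y"
proof -
  have d: "deriv FF y = DD y" using FF_deriv by (rule DERIV_imp_deriv)
  have Fp: "FF y > 0" unfolding FFg_def by (rule mixf_pos)
  have "\<sigma>\<^sup>2 * DD y = (\<integral>m. \<sigma>\<^sup>2 * (dphi \<sigma> (y - m) * G m) \<partial>lborel)"
    unfolding DDg_def by (rule integral_mult_right_zero[symmetric])
  also have "\<dots> = (\<integral>m. (m * phi \<sigma> (y - m) * G m - y * (phi \<sigma> (y - m) * G m)) \<partial>lborel)"
    using spos by (intro Bochner_Integration.integral_cong) (auto simp: dphi_def field_simps)
  also have "\<dots> = SS y - y * FF y"
    unfolding SSg_def FFg_def using int1[of y] int0[of y] by simp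
  finally have "\<sigma>\<^sup>2 * DD y = SS y - y * FF y" .
  then show ?thesis unfolding d using Fp by (simp add: field_simps)
qed

end

interpretation PL: product_sigma_finite "\<lambda>_::nat. lborel :: real measure"
  by (simp add: product_sigma_finite_def sigma_finite_lborel)

definition qf :: "(nat \<Rightarrow> real \<Rightarrow> real) \<Rightarrow> real \<Rightarrow> nat \<Rightarrow> real \<Rightarrow> real \<Rightarrow> real" where
  "qf g \<sigma> k y d = (\<integral>m. g k m * phi \<sigma> (y - m) * (m - d)\<^sup>2 \<partial>lborel)"

definition Wt where
  "Wt \<psi> a g \<sigma> n i x \<theta> = chain_prob \<psi> a n \<theta> * (\<Prod>j\<in>{..<n} - {i}. mixf g \<sigma> (\<theta> j) (x j))"

lemma states_val: "\<theta> \<in> states n \<Longrightarrow> j < n \<Longrightarrow> \<theta> j \<in> {0, 1}"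
  by (auto simp: states_def PiE_iff)

lemma finite_states: "finite (states n)"
  by (simp add: states_def finite_PiE)

definition QQg :: "(real \<Rightarrow> real) \<Rightarrow> real \<Rightarrow> real \<Rightarrow> real" where
  "QQg G s z = (\<integral>m. m\<^sup>2 * phi s (z - m) * G m \<partial>lborel)"

context dens
begin

lemma int_sq: "integrable lborel (\<lambda>m. (m - d)\<^sup>2 * phi \<sigma> (y - m) * G m)"
proof (rule int_weight[where K="2 + 2 * d\<^sup>2"])
  show "(\<lambda>m. (m - d)\<^sup>2) \<in> borel_measurable borel" by measurable
  fix m :: real
  have "0 \<le> (m + d)\<^sup>2" by simp
  then have "(m - d)\<^sup>2 \<le> 2 * m\<^sup>2 + 2 * d\<^sup>2" unfolding power2_eq_square by (simp add: algebra_simps)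
  also have "\<dots> \<le> (2 + 2 * d\<^sup>2) * (1 + m\<^sup>2)" by (simp add: algebra_simps)
  finally show "\<bar>(m - d)\<^sup>2\<bar> \<le> (2 + 2 * d\<^sup>2) * (1 + m\<^sup>2)" by simp
qed

lemma int_sq': "integrable lborel (\<lambda>m. G m * phi \<sigma> (y - m) * (m - d)\<^sup>2)"
  using int_sq[of d y] by (simp add: mult_ac)

lemma int0': "integrable lborel (\<lambda>m. G m * phi \<sigma> (y - m))"
  using int0[of y] by (simp add: mult_ac)

abbreviation "QQ \<equiv> QQg G \<sigma>"

lemma q_expand: "(\<integral>m. G m * phi \<sigma> (y - m) * (m - d)\<^sup>2 \<partial>lborel) = QQ y - 2 * d * SS y + d\<^sup>2 * FF y"
proof -
  have eq: "(\<lambda>m. G m * phi \<sigma> (y - m) * (m - d)\<^sup>2) =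
     (\<lambda>m. (m\<^sup>2 * phi \<sigma> (y - m) * G m - (2 * d) * (m * phi \<sigma> (y - m) * G m)) + d\<^sup>2 * (phi \<sigma> (y - m) * G m))"
    by (rule ext) (simp add: power2_eq_square algebra_simps)
  have i1: "integrable lborel (\<lambda>m. m\<^sup>2 * phi \<sigma> (y - m) * G m - (2 * d) * (m * phi \<sigma> (y - m) * G m))"
    using int2[of y] int1[of y] by auto
  have i2: "integrable lborel (\<lambda>m. d\<^sup>2 * (phi \<sigma> (y - m) * G m))"
    using int0[of y] by auto
  show ?thesis unfolding eq QQg_def SSg_def FFg_def
    using Bochner_Integration.integral_add[OF i1 i2] Bochner_Integration.integral_diff[OF int2[of y] integrable_mult_right[OF int1[of y]]]
    by (simp add: integral_mult_right_zero)
qed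

end

lemma inner_eq:
  assumes dk: "\<And>k. k \<in> {0, 1} \<Longrightarrow> dens (g k) \<sigma>"
    and th: "\<theta> \<in> states n" and i: "i < n" and c: "chain_prob \<psi> a n \<theta> \<ge> 0"
  shows "(\<integral>\<^sup>+ m. ennreal (chain_prob \<psi> a n \<theta> * (\<Prod>j<n. g (\<theta> j) (m j) * phi \<sigma> (x j - m j)))
          * ennreal ((m i - d)\<^sup>2) \<partial>(PiM {..<n} (\<lambda>_. lborel)))
       = ennreal (Wt \<psi> a g \<sigma> n i x \<theta> * qf g \<sigma> (\<theta> i) (x i) d)"
proof -
  define H where "H = (\<lambda>j t. g (\<theta> j) t * phi \<sigma> (x j - t) * (if j = i then (t - d)\<^sup>2 else 1))"
  have dj: "dens (g (\<theta> j)) \<sigma>" if "j < n" for j using dk states_val[OF th that] by blast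
  have Hnn: "H j t \<ge> 0" if "j < n" for j t
    using dens.Gnn[OF dj[OF that]] phi_nonneg by (simp add: H_def)
  have Hm[measurable]: "H j \<in> borel_measurable lborel" if "j < n" for j
    using dens.Gm[OF dj[OF that]] unfolding H_def phi_def by measurable
  have Hi: "integrable lborel (H j)" if "j < n" for j
  proof (cases "j = i")
    case True then show ?thesis using dens.int_sq'[OF dj[OF that]] by (simp add: H_def)
  next
    case False then show ?thesis using dens.int0'[OF dj[OF that]] by (simp add: H_def)
  qed
  have pt: "ennreal (chain_prob \<psi> a n \<theta> * (\<Prod>j<n. g (\<theta> j) (m j) * phi \<sigma> (x j - m j))) * ennreal ((m i - d)\<^sup>2)
      = ennreal (chain_prob \<psi> a n \<theta>) * (\<Prod>j<n. ennreal (H j (m j)))" for m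
  proof -
    have "(\<Prod>j<n. H j (m j)) = (\<Prod>j<n. g (\<theta> j) (m j) * phi \<sigma> (x j - m j)) * (\<Prod>j<n. if j = i then (m j - d)\<^sup>2 else 1)"
      unfolding H_def by (simp add: prod.distrib)
    also have "\<dots> = (\<Prod>j<n. g (\<theta> j) (m j) * phi \<sigma> (x j - m j)) * (m i - d)\<^sup>2"
      using i by simp
    finally have e: "(\<Prod>j<n. H j (m j)) = (\<Prod>j<n. g (\<theta> j) (m j) * phi \<sigma> (x j - m j)) * (m i - d)\<^sup>2" .
    have p0: "(\<Prod>j<n. g (\<theta> j) (m j) * phi \<sigma> (x j - m j)) \<ge> 0"
      using dens.Gnn[OF dj] phi_nonneg by (intro prod_nonneg) (simp add: mult_nonneg_nonneg)
    have pe: "(\<Prod>j<n. ennreal (H j (m j))) = ennreal (\<Prod>j<n. H j (m j))"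
      by (rule prod_ennreal) (simp add: Hnn)
    have s0: "(m i - d)\<^sup>2 \<ge> 0" by simp
    have "ennreal (chain_prob \<psi> a n \<theta> * (\<Prod>j<n. g (\<theta> j) (m j) * phi \<sigma> (x j - m j))) * ennreal ((m i - d)\<^sup>2)
       = ennreal (chain_prob \<psi> a n \<theta> * (\<Prod>j<n. g (\<theta> j) (m j) * phi \<sigma> (x j - m j)) * (m i - d)\<^sup>2)"
      using c p0 s0 by (simp add: ennreal_mult)
    also have "\<dots> = ennreal (chain_prob \<psi> a n \<theta>) * ennreal (\<Prod>j<n. H j (m j))"
      unfolding e using c p0 s0 by (simp add: ennreal_mult mult.assoc)
    finally show ?thesis unfolding pe .
  qed
  have "(\<integral>\<^sup>+ m. ennreal (chain_prob \<psi> a n \<theta> * (\<Prod>j<n. g (\<theta> j) (m j) * phi \<sigma> (x j - m j)))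
          * ennreal ((m i - d)\<^sup>2) \<partial>(PiM {..<n} (\<lambda>_. lborel)))
      = (\<integral>\<^sup>+ m. ennreal (chain_prob \<psi> a n \<theta>) * (\<Prod>j<n. ennreal (H j (m j))) \<partial>(PiM {..<n} (\<lambda>_. lborel)))"
    by (simp only: pt)
  also have "\<dots> = ennreal (chain_prob \<psi> a n \<theta>) * (\<integral>\<^sup>+ m. (\<Prod>j<n. ennreal (H j (m j))) \<partial>(PiM {..<n} (\<lambda>_. lborel)))"
    by (rule nn_integral_cmult) measurable
  also have "(\<integral>\<^sup>+ m. (\<Prod>j<n. ennreal (H j (m j))) \<partial>(PiM {..<n} (\<lambda>_. lborel))) = (\<Prod>j<n. \<integral>\<^sup>+ t. ennreal (H j t) \<partial>lborel)"
    by (rule PL.product_nn_integral_prod) auto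
  also have "\<dots> = (\<Prod>j<n. ennreal (\<integral>t. H j t \<partial>lborel))"
    using Hi Hnn by (intro prod.cong refl nn_integral_eq_integral) auto
  also have "\<dots> = ennreal (\<Prod>j<n. \<integral>t. H j t \<partial>lborel)"
    using Hnn by (intro prod_ennreal integral_nonneg_AE AE_I2) auto
  also have "(\<Prod>j<n. \<integral>t. H j t \<partial>lborel) = (\<integral>t. H i t \<partial>lborel) * (\<Prod>j\<in>{..<n} - {i}. \<integral>t. H j t \<partial>lborel)"
    using i by (simp add: prod.remove)
  also have "(\<Prod>j\<in>{..<n} - {i}. \<integral>t. H j t \<partial>lborel) = (\<Prod>j\<in>{..<n} - {i}. mixf g \<sigma> (\<theta> j) (x j))"
    by (intro prod.cong refl) (auto simp: H_def mixf_def mult.commute)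
  also have "(\<integral>t. H i t \<partial>lborel) = qf g \<sigma> (\<theta> i) (x i) d"
    by (simp add: H_def qf_def)
  finally have fin: "(\<integral>\<^sup>+ m. ennreal (chain_prob \<psi> a n \<theta> * (\<Prod>j<n. g (\<theta> j) (m j) * phi \<sigma> (x j - m j)))
          * ennreal ((m i - d)\<^sup>2) \<partial>(PiM {..<n} (\<lambda>_. lborel)))
     = ennreal (chain_prob \<psi> a n \<theta>) * ennreal (qf g \<sigma> (\<theta> i) (x i) d * (\<Prod>j\<in>{..<n} - {i}. mixf g \<sigma> (\<theta> j) (x j)))" .
  have q0: "qf g \<sigma> (\<theta> i) (x i) d \<ge> 0"
    unfolding qf_def using dens.Gnn[OF dj[OF i]] phi_nonneg
    by (intro integral_nonneg_AE AE_I2) simp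
  have p0: "(\<Prod>j\<in>{..<n} - {i}. mixf g \<sigma> (\<theta> j) (x j)) \<ge> 0"
    unfolding mixf_def using dens.Gnn[OF dj] phi_nonneg
    by (intro prod_nonneg integral_nonneg_AE AE_I2) simp
  have "ennreal (chain_prob \<psi> a n \<theta>) * ennreal (qf g \<sigma> (\<theta> i) (x i) d * (\<Prod>j\<in>{..<n} - {i}. mixf g \<sigma> (\<theta> j) (x j)))
      = ennreal (chain_prob \<psi> a n \<theta> * (qf g \<sigma> (\<theta> i) (x i) d * (\<Prod>j\<in>{..<n} - {i}. mixf g \<sigma> (\<theta> j) (x j))))"
    using c q0 p0 by (simp add: ennreal_mult)
  also have "chain_prob \<psi> a n \<theta> * (qf g \<sigma> (\<theta> i) (x i) d * (\<Prod>j\<in>{..<n} - {i}. mixf g \<sigma> (\<theta> j) (x j)))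
      = Wt \<psi> a g \<sigma> n i x \<theta> * qf g \<sigma> (\<theta> i) (x i) d"
    by (simp add: Wt_def mult_ac)
  finally show ?thesis using fin by simp
qed

lemma quad_min:
  fixes W F Qv Sv :: "'a \<Rightarrow> real"
  assumes S: "finite S" and W: "\<And>t. t \<in> S \<Longrightarrow> W t \<ge> 0" and F: "\<And>t. t \<in> S \<Longrightarrow> F t > 0"
    and q: "\<And>t d. t \<in> S \<Longrightarrow> q t d = Qv t - 2 * d * Sv t + d\<^sup>2 * F t"
    and B: "B = (\<Sum>t\<in>S. W t * Sv t) / (\<Sum>t\<in>S. W t * F t)"
  shows "(\<Sum>t\<in>S. W t * q t B) \<le> (\<Sum>t\<in>S. W t * q t d)"
proof -
  define A where "A = (\<Sum>t\<in>S. W t * F t)"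
  define Sb where "Sb = (\<Sum>t\<in>S. W t * Sv t)"
  define Qb where "Qb = (\<Sum>t\<in>S. W t * Qv t)"
  have R: "(\<Sum>t\<in>S. W t * q t e) = Qb - 2 * e * Sb + e\<^sup>2 * A" for e
  proof -
    have "(\<Sum>t\<in>S. W t * q t e) = (\<Sum>t\<in>S. W t * Qv t - (2 * e) * (W t * Sv t) + e\<^sup>2 * (W t * F t))"
      by (intro sum.cong refl) (simp add: q algebra_simps)
    also have "\<dots> = Qb - 2 * e * Sb + e\<^sup>2 * A"
      unfolding Qb_def Sb_def A_def by (simp add: sum.distrib sum_subtractf sum_distrib_left)
    finally show ?thesis .
  qed
  have A0: "A \<ge> 0" unfolding A_def using W F by (intro sum_nonneg) (simp add: less_imp_le)
  show ?thesis
  proof (cases "A = 0")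
    case True
    have "\<forall>t\<in>S. W t * F t = 0"
      using True unfolding A_def using W F S by (subst sum_nonneg_eq_0_iff[symmetric]) (auto simp: less_imp_le)
    then have "\<forall>t\<in>S. W t = 0" using F by (metis less_irrefl mult_eq_0_iff)
    then show ?thesis by simp
  next
    case False
    then have Ap: "A > 0" using A0 by simp
    have BB: "B = Sb / A" unfolding B Sb_def A_def ..
    have "(Qb - 2 * d * Sb + d\<^sup>2 * A) - (Qb - 2 * B * Sb + B\<^sup>2 * A) = A * (d - B)\<^sup>2"
      unfolding BB using Ap by (simp add: field_simps power2_eq_square)
    moreover have "A * (d - B)\<^sup>2 \<ge> 0" using A0 by simp
    ultimately show ?thesis unfolding R by linarith
  qed
qed

lemma mixf_FF: "mixf g \<sigma> k = FFg (g k) \<sigma>"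
  by (rule ext) (simp add: mixf_def FFg_def)

lemma part2:
  assumes dk: "\<And>k. k \<in> {0, 1} \<Longrightarrow> dens (g k) \<sigma>"
  shows "bayes_est \<psi> a g \<sigma> n x i = (\<Sum>k\<in>{0,1}. cond_mean g \<sigma> k (x i) * post \<psi> a g \<sigma> n i k x)"
  unfolding bayes_est_def
proof (intro sum.cong refl)
  fix k :: nat assume k: "k \<in> {0, 1}"
  have "x i + \<sigma>\<^sup>2 * deriv (mixf g \<sigma> k) (x i) / mixf g \<sigma> k (x i) = SSg (g k) \<sigma> (x i) / FFg (g k) \<sigma> (x i)"
    unfolding mixf_FF by (rule dens.tweedie[OF dk[OF k]])
  also have "\<dots> = cond_mean g \<sigma> k (x i)"
    by (simp add: cond_mean_def SSg_def FFg_def mixf_def)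
  finally show "(x i + \<sigma>\<^sup>2 * deriv (mixf g \<sigma> k) (x i) / mixf g \<sigma> k (x i)) * post \<psi> a g \<sigma> n i k x =
         cond_mean g \<sigma> k (x i) * post \<psi> a g \<sigma> n i k x" by simp
qed

definition Sk :: "(nat \<Rightarrow> real \<Rightarrow> real) \<Rightarrow> real \<Rightarrow> nat \<Rightarrow> real \<Rightarrow> real" where "Sk g s k y = (\<integral>m. m * phi s (y - m) * g k m \<partial>lborel)"

lemma mixf_pos': "dens (g k) \<sigma> \<Longrightarrow> mixf g \<sigma> k y > 0"
  using dens.mixf_pos[of "g k" \<sigma> y] by (simp add: mixf_def)

lemma bayes_formula:
  assumes dk: "\<And>k. k \<in> {0, 1} \<Longrightarrow> dens (g k) \<sigma>" and i: "i < n"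
  shows "bayes_est \<psi> a g \<sigma> n x i =
     (\<Sum>\<theta>\<in>states n. Wt \<psi> a g \<sigma> n i x \<theta> * Sk g \<sigma> (\<theta> i) (x i)) /
     (\<Sum>\<theta>\<in>states n. Wt \<psi> a g \<sigma> n i x \<theta> * mixf g \<sigma> (\<theta> i) (x i))"
proof -
  let ?S = "states n"
  let ?W = "Wt \<psi> a g \<sigma> n i x"
  define A where "A = (\<Sum>\<theta>\<in>?S. ?W \<theta> * mixf g \<sigma> (\<theta> i) (x i))"
  have cp: "chain_prob \<psi> a n \<theta> * (\<Prod>j<n. mixf g \<sigma> (\<theta> j) (x j)) = ?W \<theta> * mixf g \<sigma> (\<theta> i) (x i)" for \<theta>
  proof -
    have "(\<Prod>j<n. mixf g \<sigma> (\<theta> j) (x j)) = mixf g \<sigma> (\<theta> i) (x i) * (\<Prod>j\<in>{..<n} - {i}. mixf g \<sigma> (\<theta> j) (x j))"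
      using i by (intro prod.remove) auto
    then show ?thesis unfolding Wt_def by (simp only: mult_ac)
  qed
  have post: "post \<psi> a g \<sigma> n i k x = (\<Sum>\<theta>\<in>{\<theta>\<in>?S. \<theta> i = k}. ?W \<theta> * mixf g \<sigma> (\<theta> i) (x i)) / A" for k
    unfolding post_def A_def by (simp only: cp)
  have grp: "(\<Sum>k\<in>{0,1}. \<Sum>\<theta>\<in>{\<theta>\<in>?S. \<theta> i = k}. f \<theta>) = (\<Sum>\<theta>\<in>?S. f \<theta>)" for f :: "_ \<Rightarrow> real"
  proof -
    have img: "(\<lambda>\<theta>. \<theta> i) ` ?S \<subseteq> {0,1}"
    proof
      fix v assume "v \<in> (\<lambda>\<theta>. \<theta> i) ` ?S"
      then obtain \<theta> where t: "\<theta> \<in> ?S" and v: "v = \<theta> i" by blast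
      show "v \<in> {0,1}" unfolding v by (rule states_val[OF t i])
    qed
    show ?thesis by (rule sum.group[OF finite_states _ img]) simp
  qed
  have "bayes_est \<psi> a g \<sigma> n x i = (\<Sum>k\<in>{0,1}. cond_mean g \<sigma> k (x i) * post \<psi> a g \<sigma> n i k x)"
    by (rule part2[OF dk])
  also have "\<dots> = (\<Sum>k\<in>{0,1}. \<Sum>\<theta>\<in>{\<theta>\<in>?S. \<theta> i = k}. ?W \<theta> * Sk g \<sigma> (\<theta> i) (x i) / A)"
  proof (intro sum.cong refl)
    fix k :: nat assume k: "k \<in> {0, 1}"
    have Fk: "mixf g \<sigma> k (x i) \<noteq> 0" using mixf_pos'[where g=g and k=k and y="x i", OF dk[OF k]] by (rule less_imp_neq[symmetric])
    have "cond_mean g \<sigma> k (x i) * post \<psi> a g \<sigma> n i k x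
       = (\<Sum>\<theta>\<in>{\<theta>\<in>?S. \<theta> i = k}. Sk g \<sigma> k (x i) / mixf g \<sigma> k (x i) * (?W \<theta> * mixf g \<sigma> (\<theta> i) (x i)) / A)"
      unfolding post cond_mean_def Sk_def by (simp add: sum_distrib_left sum_divide_distrib)
    also have "\<dots> = (\<Sum>\<theta>\<in>{\<theta>\<in>?S. \<theta> i = k}. ?W \<theta> * Sk g \<sigma> (\<theta> i) (x i) / A)"
    proof (intro sum.cong refl)
      fix \<theta> assume "\<theta> \<in> {\<theta>\<in>?S. \<theta> i = k}"
      then have ti: "\<theta> i = k" by simp
      have "Sk g \<sigma> k (x i) / mixf g \<sigma> k (x i) * (?W \<theta> * mixf g \<sigma> k (x i)) = ?W \<theta> * Sk g \<sigma> k (x i)"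
        using Fk by simp
      then show "Sk g \<sigma> k (x i) / mixf g \<sigma> k (x i) * (?W \<theta> * mixf g \<sigma> (\<theta> i) (x i)) / A = ?W \<theta> * Sk g \<sigma> (\<theta> i) (x i) / A"
        unfolding ti by simp
    qed
    finally show "cond_mean g \<sigma> k (x i) * post \<psi> a g \<sigma> n i k x = (\<Sum>\<theta>\<in>{\<theta>\<in>?S. \<theta> i = k}. ?W \<theta> * Sk g \<sigma> (\<theta> i) (x i) / A)" .
  qed
  also have "\<dots> = (\<Sum>\<theta>\<in>?S. ?W \<theta> * Sk g \<sigma> (\<theta> i) (x i) / A)" by (rule grp)
  also have "\<dots> = (\<Sum>\<theta>\<in>?S. ?W \<theta> * Sk g \<sigma> (\<theta> i) (x i)) / A" by (simp add: sum_divide_distrib)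
  finally show ?thesis unfolding A_def .
qed

context dens begin
lemma FF_meas: "FFg G \<sigma> \<in> borel_measurable borel"
  unfolding FFg_def[abs_def] phi_def
  by (rule lborel.borel_measurable_lebesgue_integral) measurable
lemma SS_meas: "SSg G \<sigma> \<in> borel_measurable borel"
  unfolding SSg_def[abs_def] phi_def
  by (rule lborel.borel_measurable_lebesgue_integral) measurable
lemma QQ_meas: "QQg G \<sigma> \<in> borel_measurable borel"
  unfolding QQg_def[abs_def] phi_def
  by (rule lborel.borel_measurable_lebesgue_integral) measurable
end

lemma qf_expand: "dens (g k) \<sigma> \<Longrightarrow> qf g \<sigma> k y d = QQg (g k) \<sigma> y - 2 * d * Sk g \<sigma> k y + d\<^sup>2 * mixf g \<sigma> k y"
  unfolding qf_def using dens.q_expand[of "g k" \<sigma> y d]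
  by (simp add: SSg_def Sk_def FFg_def mixf_def)

abbreviation "MM n \<equiv> PiM {..<n} (\<lambda>_. lborel :: real measure)"

lemma mixf_meas_x:
  assumes "dens (g k) \<sigma>" "j < n"
  shows "(\<lambda>x. mixf g \<sigma> k (x j)) \<in> borel_measurable (MM n)"
proof -
  have "mixf g \<sigma> k \<in> borel_measurable borel" unfolding mixf_FF by (rule dens.FF_meas[OF assms(1)])
  then show ?thesis
    using measurable_component_singleton[of j "{..<n}" "\<lambda>_. lborel :: real measure"] assms(2)
    by (simp add: measurable_compose[where f="\<lambda>x. x j"])
qed

lemma Sk_meas_x:
  assumes "dens (g k) \<sigma>" "j < n"
  shows "(\<lambda>x. Sk g \<sigma> k (x j)) \<in> borel_measurable (MM n)"
proof -
  have e: "Sk g \<sigma> k = SSg (g k) \<sigma>" by (rule ext) (simp add: Sk_def SSg_def)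
  have "Sk g \<sigma> k \<in> borel_measurable borel" unfolding e by (rule dens.SS_meas[OF assms(1)])
  then show ?thesis
    using measurable_component_singleton[of j "{..<n}" "\<lambda>_. lborel :: real measure"] assms(2)
    by (simp add: measurable_compose[where f="\<lambda>x. x j"])
qed

lemma QQ_meas_x:
  assumes "dens (g k) \<sigma>" "j < n"
  shows "(\<lambda>x. QQg (g k) \<sigma> (x j)) \<in> borel_measurable (MM n)"
proof -
  have "QQg (g k) \<sigma> \<in> borel_measurable borel" by (rule dens.QQ_meas[OF assms(1)])
  then show ?thesis
    using measurable_component_singleton[of j "{..<n}" "\<lambda>_. lborel :: real measure"] assms(2)
    by (simp add: measurable_compose[where f="\<lambda>x. x j"])
qed

lemma Wt_meas:
  assumes dk: "\<And>k. k \<in> {0, 1} \<Longrightarrow> dens (g k) \<sigma>" and th: "\<theta> \<in> states n"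
  shows "(\<lambda>x. Wt \<psi> a g \<sigma> n i x \<theta>) \<in> borel_measurable (MM n)"
  unfolding Wt_def
proof (intro borel_measurable_times borel_measurable_const borel_measurable_prod)
  fix j assume "j \<in> {..<n} - {i}"
  then have j: "j < n" by simp
  show "(\<lambda>x. mixf g \<sigma> (\<theta> j) (x j)) \<in> borel_measurable (MM n)"
    by (rule mixf_meas_x[where g=g and k="\<theta> j", OF dk[OF states_val[OF th j]] j])
qed

lemma chain_nonneg:
  assumes "\<psi> 0 \<ge> 0" "\<psi> 1 \<ge> 0" "\<forall>j\<in>{0,1}. \<forall>k\<in>{0,1}. 0 < a j k \<and> a j k < 1"
    and th: "\<theta> \<in> states n" and n: "n \<ge> 1"
  shows "chain_prob \<psi> a n \<theta> \<ge> 0"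
proof -
  have "\<theta> 0 \<in> {0,1}" using states_val[OF th] n by simp
  then have p: "\<psi> (\<theta> 0) \<ge> 0" using assms(1,2) by auto
  have "\<forall>i\<in>{1..<n}. a (\<theta> (i - 1)) (\<theta> i) \<ge> 0"
  proof
    fix i assume i: "i \<in> {1..<n}"
    have "i - 1 < n" "i < n" using i by auto
    then have "\<theta> (i - 1) \<in> {0,1}" "\<theta> i \<in> {0,1}" using states_val[OF th] by auto
    then show "a (\<theta> (i - 1)) (\<theta> i) \<ge> 0" using assms(3) by (meson less_imp_le)
  qed
  then show ?thesis unfolding chain_prob_def using p by (intro mult_nonneg_nonneg prod_nonneg) auto
qed

lemma mixf_nonneg: "dens (g k) \<sigma> \<Longrightarrow> mixf g \<sigma> k y \<ge> 0"
  using mixf_pos'[where g=g and k=k and y=y] by (simp add: less_imp_le)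

locale setting =
  fixes n :: nat and \<sigma> :: real and \<psi> :: "nat \<Rightarrow> real"
    and a :: "nat \<Rightarrow> nat \<Rightarrow> real" and g :: "nat \<Rightarrow> real \<Rightarrow> real"
  assumes n1: "n \<ge> 1"
    and dk: "\<And>k. k \<in> {0, 1} \<Longrightarrow> dens (g k) \<sigma>"
    and cnn: "\<And>\<theta>. \<theta> \<in> states n \<Longrightarrow> chain_prob \<psi> a n \<theta> \<ge> 0"
begin

lemma dth: "\<theta> \<in> states n \<Longrightarrow> j < n \<Longrightarrow> dens (g (\<theta> j)) \<sigma>"
  using dk states_val by blast

lemma Wt_nonneg: assumes th: "\<theta> \<in> states n" shows "Wt \<psi> a g \<sigma> n i x \<theta> \<ge> 0"
  unfolding Wt_def
proof (intro mult_nonneg_nonneg prod_nonneg)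
  show "chain_prob \<psi> a n \<theta> \<ge> 0" by (rule cnn[OF th])
  fix j assume "j \<in> {..<n} - {i}"
  then have j: "j < n" by simp
  show "mixf g \<sigma> (\<theta> j) (x j) \<ge> 0" by (rule mixf_nonneg[where g=g and k="\<theta> j", OF dth[OF th j]])
qed

lemma qf_nonneg: "\<theta> \<in> states n \<Longrightarrow> i < n \<Longrightarrow> qf g \<sigma> (\<theta> i) y e \<ge> 0"
  unfolding qf_def using dens.Gnn[OF dth] phi_nonneg
  by (intro integral_nonneg_AE AE_I2) simp

lemma T_meas:
  assumes th: "\<theta> \<in> states n" and i: "i < n" and d[measurable]: "d \<in> borel_measurable (MM n)"
  shows "(\<lambda>x. Wt \<psi> a g \<sigma> n i x \<theta> * qf g \<sigma> (\<theta> i) (x i) (d x)) \<in> borel_measurable (MM n)"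
proof -
  note D = dth[OF th i]
  have e: "(\<lambda>x. Wt \<psi> a g \<sigma> n i x \<theta> * qf g \<sigma> (\<theta> i) (x i) (d x)) =
    (\<lambda>x. Wt \<psi> a g \<sigma> n i x \<theta> * (QQg (g (\<theta> i)) \<sigma> (x i) - 2 * d x * Sk g \<sigma> (\<theta> i) (x i) + (d x)\<^sup>2 * mixf g \<sigma> (\<theta> i) (x i)))"
    by (rule ext) (simp add: qf_expand[where g=g and k="\<theta> i", OF D])
  note [measurable] = Wt_meas[OF dk th] QQ_meas_x[where g=g and k="\<theta> i", OF D i] Sk_meas_x[where g=g and k="\<theta> i", OF D i] mixf_meas_x[where g=g and k="\<theta> i", OF D i]
  show ?thesis unfolding e by measurable
qed

lemma per_i:
  assumes i: "i < n" and d[measurable]: "d \<in> borel_measurable (MM n)"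
  shows "(\<Sum>\<theta>\<in>states n. \<integral>\<^sup>+ x. \<integral>\<^sup>+ m.
          ennreal (chain_prob \<psi> a n \<theta> * (\<Prod>j<n. g (\<theta> j) (m j) * phi \<sigma> (x j - m j)))
          * ennreal ((m i - d x)\<^sup>2) \<partial>MM n \<partial>MM n)
    = (\<integral>\<^sup>+ x. ennreal (\<Sum>\<theta>\<in>states n. Wt \<psi> a g \<sigma> n i x \<theta> * qf g \<sigma> (\<theta> i) (x i) (d x)) \<partial>MM n)"
proof -
  have "(\<Sum>\<theta>\<in>states n. \<integral>\<^sup>+ x. \<integral>\<^sup>+ m.
          ennreal (chain_prob \<psi> a n \<theta> * (\<Prod>j<n. g (\<theta> j) (m j) * phi \<sigma> (x j - m j)))
          * ennreal ((m i - d x)\<^sup>2) \<partial>MM n \<partial>MM n)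
     = (\<Sum>\<theta>\<in>states n. \<integral>\<^sup>+ x. ennreal (Wt \<psi> a g \<sigma> n i x \<theta> * qf g \<sigma> (\<theta> i) (x i) (d x)) \<partial>MM n)"
    by (intro sum.cong refl nn_integral_cong inner_eq[OF dk _ i cnn]) auto
  also have "\<dots> = (\<integral>\<^sup>+ x. (\<Sum>\<theta>\<in>states n. ennreal (Wt \<psi> a g \<sigma> n i x \<theta> * qf g \<sigma> (\<theta> i) (x i) (d x))) \<partial>MM n)"
    by (rule nn_integral_sum[symmetric]) (use T_meas[OF _ i d] in measurable)
  also have "\<dots> = (\<integral>\<^sup>+ x. ennreal (\<Sum>\<theta>\<in>states n. Wt \<psi> a g \<sigma> n i x \<theta> * qf g \<sigma> (\<theta> i) (x i) (d x)) \<partial>MM n)"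
    using Wt_nonneg qf_nonneg[OF _ i] by (intro nn_integral_cong sum_ennreal) (simp add: mult_nonneg_nonneg)
  finally show ?thesis .
qed

lemma pointwise:
  assumes i: "i < n"
  shows "(\<Sum>\<theta>\<in>states n. Wt \<psi> a g \<sigma> n i x \<theta> * qf g \<sigma> (\<theta> i) (x i) (bayes_est \<psi> a g \<sigma> n x i))
      \<le> (\<Sum>\<theta>\<in>states n. Wt \<psi> a g \<sigma> n i x \<theta> * qf g \<sigma> (\<theta> i) (x i) e)"
proof (rule quad_min[where F="\<lambda>\<theta>. mixf g \<sigma> (\<theta> i) (x i)" and Qv="\<lambda>\<theta>. QQg (g (\<theta> i)) \<sigma> (x i)"
      and Sv="\<lambda>\<theta>. Sk g \<sigma> (\<theta> i) (x i)"])
  show "finite (states n)" by (rule finite_states)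
  show "\<And>t. t \<in> states n \<Longrightarrow> 0 \<le> Wt \<psi> a g \<sigma> n i x t" by (rule Wt_nonneg)
  show "\<And>t. t \<in> states n \<Longrightarrow> 0 < mixf g \<sigma> (t i) (x i)"
    using mixf_pos' dth[OF _ i] by blast
  show "\<And>t d. t \<in> states n \<Longrightarrow> qf g \<sigma> (t i) (x i) d = QQg (g (t i)) \<sigma> (x i) - 2 * d * Sk g \<sigma> (t i) (x i) + d\<^sup>2 * mixf g \<sigma> (t i) (x i)"
    using qf_expand dth[OF _ i] by blast
  show "bayes_est \<psi> a g \<sigma> n x i = (\<Sum>t\<in>states n. Wt \<psi> a g \<sigma> n i x t * Sk g \<sigma> (t i) (x i)) /
       (\<Sum>t\<in>states n. Wt \<psi> a g \<sigma> n i x t * mixf g \<sigma> (t i) (x i))"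
    by (rule bayes_formula[OF dk i])
qed

lemma B_meas:
  assumes i: "i < n"
  shows "(\<lambda>x. bayes_est \<psi> a g \<sigma> n x i) \<in> borel_measurable (MM n)"
proof -
  have e: "(\<lambda>x. bayes_est \<psi> a g \<sigma> n x i) = (\<lambda>x. (\<Sum>t\<in>states n. Wt \<psi> a g \<sigma> n i x t * Sk g \<sigma> (t i) (x i)) /
       (\<Sum>t\<in>states n. Wt \<psi> a g \<sigma> n i x t * mixf g \<sigma> (t i) (x i)))"
    by (rule ext) (rule bayes_formula[OF dk i])
  have m1: "(\<lambda>x. Wt \<psi> a g \<sigma> n i x t * Sk g \<sigma> (t i) (x i)) \<in> borel_measurable (MM n)" if t: "t \<in> states n" for t
    using Wt_meas[OF dk t] Sk_meas_x[where g=g and k="t i", OF dth[OF t i] i] by (rule borel_measurable_times)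
  have m2: "(\<lambda>x. Wt \<psi> a g \<sigma> n i x t * mixf g \<sigma> (t i) (x i)) \<in> borel_measurable (MM n)" if t: "t \<in> states n" for t
    using Wt_meas[OF dk t] mixf_meas_x[where g=g and k="t i", OF dth[OF t i] i] by (rule borel_measurable_times)
  show ?thesis unfolding e
    by (intro borel_measurable_divide borel_measurable_sum m1 m2)
qed

end

theorem lemma1:
  fixes n :: nat and \<sigma> :: real and \<psi> :: "nat \<Rightarrow> real"
    and a :: "nat \<Rightarrow> nat \<Rightarrow> real" and g :: "nat \<Rightarrow> real \<Rightarrow> real"
  assumes "n \<ge> 1"
    and "\<sigma> > 0"
    and "\<psi> 0 \<ge> 0" and "\<psi> 1 \<ge> 0" and "\<psi> 0 + \<psi> 1 = 1"
    and "\<forall>j\<in>{0,1}. \<forall>k\<in>{0,1}. 0 < a j k \<and> a j k < 1"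
    and "\<forall>j\<in>{0,1}. a j 0 + a j 1 = 1"
    and "\<forall>k\<in>{0,1}. g k \<in> borel_measurable lborel \<and> (\<forall>m. g k m \<ge> 0)
                    \<and> (\<integral>\<^sup>+ m. ennreal (g k m) \<partial>lborel) = 1"
  shows "(\<forall>\<delta>. (\<forall>i<n. (\<lambda>x. \<delta> x i) \<in> borel_measurable (PiM {..<n} (\<lambda>_. lborel)))
              \<longrightarrow> mse \<psi> a g \<sigma> n (bayes_est \<psi> a g \<sigma> n) \<le> mse \<psi> a g \<sigma> n \<delta>)
       \<and> (\<forall>x i. i < n \<longrightarrow>
            bayes_est \<psi> a g \<sigma> n x i = (\<Sum>k\<in>{0,1}. cond_mean g \<sigma> k (x i) * post \<psi> a g \<sigma> n i k x))"
proof -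
  have dk: "dens (g k) \<sigma>" if k: "k \<in> {0, 1}" for k
    using assms(2) assms(8) k unfolding dens_def by auto
  have cnn: "chain_prob \<psi> a n \<theta> \<ge> 0" if "\<theta> \<in> states n" for \<theta>
    by (rule chain_nonneg[OF assms(3,4,6) that assms(1)])
  interpret S: setting n \<sigma> \<psi> a g
    by (rule setting.intro[OF assms(1) dk cnn])
  show ?thesis
  proof (intro conjI allI impI)
    fix x :: "nat \<Rightarrow> real" and i :: nat
    show "bayes_est \<psi> a g \<sigma> n x i = (\<Sum>k\<in>{0,1}. cond_mean g \<sigma> k (x i) * post \<psi> a g \<sigma> n i k x)"
      by (rule part2[OF dk])
  next
    fix \<delta> :: "(nat \<Rightarrow> real) \<Rightarrow> nat \<Rightarrow> real"
    assume meas: "\<forall>i<n. (\<lambda>x. \<delta> x i) \<in> borel_measurable (PiM {..<n} (\<lambda>_. lborel))"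
    show "mse \<psi> a g \<sigma> n (bayes_est \<psi> a g \<sigma> n) \<le> mse \<psi> a g \<sigma> n \<delta>"
      unfolding mse_def
    proof (rule mult_left_mono, rule sum_mono)
      fix i assume "i \<in> {..<n}"
      then have i: "i < n" by simp
      have "(\<Sum>\<theta>\<in>states n. \<integral>\<^sup>+ x. \<integral>\<^sup>+ m.
          ennreal (chain_prob \<psi> a n \<theta> * (\<Prod>j<n. g (\<theta> j) (m j) * phi \<sigma> (x j - m j)))
          * ennreal ((m i - bayes_est \<psi> a g \<sigma> n x i)\<^sup>2) \<partial>MM n \<partial>MM n)
        = (\<integral>\<^sup>+ x. ennreal (\<Sum>\<theta>\<in>states n. Wt \<psi> a g \<sigma> n i x \<theta> * qf g \<sigma> (\<theta> i) (x i) (bayes_est \<psi> a g \<sigma> n x i)) \<partial>MM n)"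
        using S.per_i[OF i S.B_meas[OF i]] by simp
      also have "\<dots> \<le> (\<integral>\<^sup>+ x. ennreal (\<Sum>\<theta>\<in>states n. Wt \<psi> a g \<sigma> n i x \<theta> * qf g \<sigma> (\<theta> i) (x i) (\<delta> x i)) \<partial>MM n)"
        by (intro nn_integral_mono ennreal_leI S.pointwise[OF i])
      also have "\<dots> = (\<Sum>\<theta>\<in>states n. \<integral>\<^sup>+ x. \<integral>\<^sup>+ m.
          ennreal (chain_prob \<psi> a n \<theta> * (\<Prod>j<n. g (\<theta> j) (m j) * phi \<sigma> (x j - m j)))
          * ennreal ((m i - \<delta> x i)\<^sup>2) \<partial>MM n \<partial>MM n)"
        using S.per_i[OF i, of "\<lambda>x. \<delta> x i"] meas i by simp
      finally show "(\<Sum>\<theta>\<in>states n. \<integral>\<^sup>+ x. \<integral>\<^sup>+ m.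
          ennreal (chain_prob \<psi> a n \<theta> * (\<Prod>j<n. g (\<theta> j) (m j) * phi \<sigma> (x j - m j)))
          * ennreal ((m i - bayes_est \<psi> a g \<sigma> n x i)\<^sup>2) \<partial>MM n \<partial>MM n)
        \<le> (\<Sum>\<theta>\<in>states n. \<integral>\<^sup>+ x. \<integral>\<^sup>+ m.
          ennreal (chain_prob \<psi> a n \<theta> * (\<Prod>j<n. g (\<theta> j) (m j) * phi \<sigma> (x j - m j)))
          * ennreal ((m i - \<delta> x i)\<^sup>2) \<partial>MM n \<partial>MM n)" .
    qed simp
  qed
qed

end
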